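(* If a liner $X$ is $\kappa$-parallel for some finite nonzero cardinal $\kappa$, then for every triangle $abc$ in $X$ there exists a point $d\in X$ such that $abcd$ is a parallelogram.
   Context: A liner is a set $X$ of points with a family of subsets called lines such that any two distinct points lie in a unique line and every line contains at least two points. For distinct $x,y$, $\overline{xy}$ is the line through them and $\overline{xx}:=\{x\}$. A set is flat if it contains $\overline{xy}$ for all its distinct points; $\overline A$ is the smallest flat containing $A$; the rank $\|A\|$ is the smallest cardinality of $B\subseteq X$ with $A\subseteq\overline B$; a plane is a flat of rank 3. $X$ is $\kappa$-parallel if for every plane $P$, line $L\subseteq P$ and point $x\in P\setminus L$ there exist exactly $\kappa$ lines $\Lambda$ with $x\in\Lambda\subseteq P\setminus L$. A triangle is a triple $abc\in X^3$ with $\|\{a,b,c\}\|=3$. A flat $A$ is subparallel to a flat $B$ if $A\subseteq\overline{\{a\}\cup B}$ for every $a\in A$; $A\parallel B$ means each is subparallel to the other. A parallelogram is a quadruple $abcd\in X^4$ with $\overline{ab}\parallel\overline{cd}\ne\overline{ab}$ and $\overline{bc}\parallel\overline{ad}\ne\overline{bc}$. *)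

theory Defs
  imports Main
begin

definition liner :: "'a set \<Rightarrow> 'a set set \<Rightarrow> bool" where
  "liner X L \<longleftrightarrow>
     (\<forall>l\<in>L. l \<subseteq> X \<and> (\<exists>x y. x \<noteq> y \<and> x \<in> l \<and> y \<in> l)) \<and>
     (\<forall>x\<in>X. \<forall>y\<in>X. x \<noteq> y \<longrightarrow> (\<exists>!l. l \<in> L \<and> x \<in> l \<and> y \<in> l))"

definition line_through :: "'a set set \<Rightarrow> 'a \<Rightarrow> 'a \<Rightarrow> 'a set" where
  "line_through L x y = (if x = y then {x} else (THE l. l \<in> L \<and> x \<in> l \<and> y \<in> l))"

definition flat :: "'a set \<Rightarrow> 'a set set \<Rightarrow> 'a set \<Rightarrow> bool" where
  "flat X L A \<longleftrightarrow> A \<subseteq> X \<and> (\<forall>x\<in>A. \<forall>y\<in>A. line_through L x y \<subseteq> A)"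

definition flat_hull :: "'a set \<Rightarrow> 'a set set \<Rightarrow> 'a set \<Rightarrow> 'a set" where
  "flat_hull X L A = \<Inter>{F. flat X L F \<and> A \<subseteq> F}"

definition has_rank :: "'a set \<Rightarrow> 'a set set \<Rightarrow> 'a set \<Rightarrow> nat \<Rightarrow> bool" where
  "has_rank X L A n \<longleftrightarrow>
     (\<exists>B. B \<subseteq> X \<and> finite B \<and> card B = n \<and> A \<subseteq> flat_hull X L B) \<and>
     (\<forall>B. B \<subseteq> X \<and> finite B \<and> A \<subseteq> flat_hull X L B \<longrightarrow> n \<le> card B)"

definition plane :: "'a set \<Rightarrow> 'a set set \<Rightarrow> 'a set \<Rightarrow> bool" where
  "plane X L P \<longleftrightarrow> flat X L P \<and> has_rank X L P 3"

definition k_parallel :: "'a set \<Rightarrow> 'a set set \<Rightarrow> nat \<Rightarrow> bool" where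
  "k_parallel X L \<kappa> \<longleftrightarrow>
     (\<forall>P Ln x. plane X L P \<and> Ln \<in> L \<and> Ln \<subseteq> P \<and> x \<in> P - Ln \<longrightarrow>
        finite {\<Lambda>. \<Lambda> \<in> L \<and> x \<in> \<Lambda> \<and> \<Lambda> \<subseteq> P - Ln} \<and>
        card {\<Lambda>. \<Lambda> \<in> L \<and> x \<in> \<Lambda> \<and> \<Lambda> \<subseteq> P - Ln} = \<kappa>)"

definition triangle :: "'a set \<Rightarrow> 'a set set \<Rightarrow> 'a \<Rightarrow> 'a \<Rightarrow> 'a \<Rightarrow> bool" where
  "triangle X L a b c \<longleftrightarrow> a \<in> X \<and> b \<in> X \<and> c \<in> X \<and> has_rank X L {a, b, c} 3"

definition subparallel :: "'a set \<Rightarrow> 'a set set \<Rightarrow> 'a set \<Rightarrow> 'a set \<Rightarrow> bool" where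
  "subparallel X L A B \<longleftrightarrow> (\<forall>a\<in>A. A \<subseteq> flat_hull X L (insert a B))"

definition parallel :: "'a set \<Rightarrow> 'a set set \<Rightarrow> 'a set \<Rightarrow> 'a set \<Rightarrow> bool" where
  "parallel X L A B \<longleftrightarrow> subparallel X L A B \<and> subparallel X L B A"

definition parallelogram :: "'a set \<Rightarrow> 'a set set \<Rightarrow> 'a \<Rightarrow> 'a \<Rightarrow> 'a \<Rightarrow> 'a \<Rightarrow> bool" where
  "parallelogram X L a b c d \<longleftrightarrow>
     a \<in> X \<and> b \<in> X \<and> c \<in> X \<and> d \<in> X \<and>
     parallel X L (line_through L a b) (line_through L c d) \<and>
     line_through L c d \<noteq> line_through L a b \<and>
     parallel X L (line_through L b c) (line_through L a d) \<and>
     line_through L b c \<noteq> line_through L a d"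

end

theory Submission
  imports Defs
begin

lemma liner_D1:
  assumes "liner X L" "l \<in> L" shows "l \<subseteq> X" "\<exists>x y. x \<noteq> y \<and> x \<in> l \<and> y \<in> l"
  using assms unfolding liner_def by simp_all

lemma liner_D2:
  assumes "liner X L" "x \<in> X" "y \<in> X" "x \<noteq> y" shows "\<exists>!l. l \<in> L \<and> x \<in> l \<and> y \<in> l"
proof -
  have "\<forall>x\<in>X. \<forall>y\<in>X. x \<noteq> y \<longrightarrow> (\<exists>!l. l \<in> L \<and> x \<in> l \<and> y \<in> l)"
    using assms(1) unfolding liner_def by (rule conjunct2)
  then show ?thesis using assms(2-4) by simp
qed

lemma line_props:
  assumes "liner X L" "x \<in> X" "y \<in> X" "x \<noteq> y"
  shows "line_through L x y \<in> L \<and> x \<in> line_through L x y \<and> y \<in> line_through L x y"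
proof -
  from theI'[OF liner_D2[OF assms]] show ?thesis using assms(4) unfolding line_through_def by simp
qed

lemma line_sub_X:
  assumes "liner X L" "l \<in> L" shows "l \<subseteq> X"
  using liner_D1[OF assms] by simp

lemma line_unique:
  assumes "liner X L" "l \<in> L" "x \<in> l" "y \<in> l" "x \<noteq> y"
  shows "l = line_through L x y"
proof -
  have X: "x \<in> X" "y \<in> X" using line_sub_X[OF assms(1,2)] assms(3,4) by auto
  have u: "\<exists>!l. l \<in> L \<and> x \<in> l \<and> y \<in> l" using liner_D2[OF assms(1) X assms(5)] .
  have lp: "line_through L x y \<in> L \<and> x \<in> line_through L x y \<and> y \<in> line_through L x y"
    using line_props[OF assms(1) X assms(5)] .
  from u obtain l0 where l0: "\<And>l'. l' \<in> L \<and> x \<in> l' \<and> y \<in> l' \<Longrightarrow> l' = l0" by blast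
  have "l = l0" using l0 assms(2-4) by simp
  moreover have "line_through L x y = l0" using l0 lp by simp
  ultimately show ?thesis by simp
qed

lemma line_flat:
  assumes "liner X L" "l \<in> L" shows "flat X L l"
  unfolding flat_def
proof (intro conjI ballI)
  show "l \<subseteq> X" using line_sub_X[OF assms] .
  fix p q assume "p \<in> l" "q \<in> l"
  then show "line_through L p q \<subseteq> l"
  proof (cases "p = q")
    case True then show ?thesis using \<open>p \<in> l\<close> by (simp add: line_through_def)
  next
    case False
    then have "l = line_through L p q" using line_unique[OF assms(1,2) \<open>p \<in> l\<close> \<open>q \<in> l\<close>] by simp
    then show ?thesis by simp
  qed
qed

lemma X_flat:
  assumes "liner X L" shows "flat X L X"
  unfolding flat_def
proof (intro conjI ballI)
  fix p q assume "p \<in> X" "q \<in> X"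
  then show "line_through L p q \<subseteq> X"
  proof (cases "p = q")
    case True then show ?thesis using \<open>p \<in> X\<close> by (simp add: line_through_def)
  next
    case False
    then have "line_through L p q \<in> L" using line_props[OF assms \<open>p \<in> X\<close> \<open>q \<in> X\<close>] by simp
    then show ?thesis using line_sub_X[OF assms] by simp
  qed
qed simp

lemma hull_min:
  assumes "flat X L F" "A \<subseteq> F" shows "flat_hull X L A \<subseteq> F"
  using assms unfolding flat_hull_def by blast

lemma hull_sub:
  assumes "liner X L" "A \<subseteq> X" shows "A \<subseteq> flat_hull X L A"
  unfolding flat_hull_def by blast

lemma hull_flat:
  assumes "liner X L" "A \<subseteq> X" shows "flat X L (flat_hull X L A)"
proof -
  have XF: "flat X L X" using X_flat[OF assms(1)] .
  have "flat_hull X L A \<subseteq> X" using hull_min[OF XF assms(2)] .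
  moreover have "line_through L x y \<subseteq> flat_hull X L A"
    if "x \<in> flat_hull X L A" "y \<in> flat_hull X L A" for x y
  proof -
    have "line_through L x y \<subseteq> F" if F: "flat X L F" "A \<subseteq> F" for F
    proof -
      have "x \<in> F" "y \<in> F" using \<open>x \<in> flat_hull X L A\<close> \<open>y \<in> flat_hull X L A\<close> F
        unfolding flat_hull_def by auto
      then show ?thesis using F(1) unfolding flat_def by blast
    qed
    then show ?thesis unfolding flat_hull_def by (intro Inter_greatest) auto
  qed
  ultimately show ?thesis unfolding flat_def by blast
qed

lemma hull_mono:
  assumes "liner X L" "B \<subseteq> X" "A \<subseteq> B" shows "flat_hull X L A \<subseteq> flat_hull X L B"
  using hull_min[OF hull_flat[OF assms(1,2)]] hull_sub[OF assms(1,2)] assms(3) by blast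

lemma flat_line:
  assumes "flat X L F" "a \<in> F" "b \<in> F" shows "line_through L a b \<subseteq> F"
  using assms unfolding flat_def by blast

lemma rank3_lower:
  assumes "has_rank X L A 3" "B \<subseteq> X" "finite B" "A \<subseteq> flat_hull X L B"
  shows "3 \<le> card B"
  using assms unfolding has_rank_def by blast

lemma noncollinear_rank3:
  assumes lin: "liner X L" and X: "a \<in> X" "b \<in> X" "c \<in> X" and ab: "a \<noteq> b"
    and c: "c \<notin> line_through L a b"
  shows "has_rank X L {a,b,c} 3"
proof -
  have lab: "line_through L a b \<in> L" "a \<in> line_through L a b" "b \<in> line_through L a b"
    using line_props[OF lin X(1,2) ab] by auto
  have ca: "c \<noteq> a" "c \<noteq> b" using c lab by auto
  have "card {a,b,c} = 3" using ab ca by auto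
  moreover have "3 \<le> card B" if B: "B \<subseteq> X" "finite B" "{a,b,c} \<subseteq> flat_hull X L B" for B
  proof (rule ccontr)
    assume "\<not> 3 \<le> card B"
    hence "card B = 0 \<or> card B = 1 \<or> card B = 2" by linarith
    then show False
    proof (elim disjE)
      assume "card B = 0"
      hence "B = {}" using B by simp
      moreover have "flat X L {}" unfolding flat_def by simp
      ultimately have "flat_hull X L B = {}" using hull_min[of X L "{}" B] by blast
      thus False using B by blast
    next
      assume "card B = 1"
      then obtain p where "B = {p}" using card_1_singletonE by blast
      moreover have "flat X L {p}" using B \<open>B = {p}\<close> unfolding flat_def line_through_def by simp
      ultimately have "flat_hull X L B \<subseteq> {p}" using hull_min[of X L "{p}" B] by blast
      thus False using B ab by blast
    next
      assume "card B = 2"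
      then obtain p q where pq: "B = {p,q}" "p \<noteq> q" unfolding card_2_iff by blast
      have pX: "p \<in> X" "q \<in> X" using B(1) pq(1) by auto
      have lpq: "line_through L p q \<in> L" "p \<in> line_through L p q" "q \<in> line_through L p q"
        using line_props[OF lin pX pq(2)] by auto
      have "B \<subseteq> line_through L p q" using pq(1) lpq by simp
      then have "flat_hull X L B \<subseteq> line_through L p q"
        by (rule hull_min[OF line_flat[OF lin lpq(1)]])
      hence abc: "{a,b,c} \<subseteq> line_through L p q" using B by blast
      hence "line_through L p q = line_through L a b"
        using abc ab by (intro line_unique[OF lin lpq(1)]) auto
      thus False using abc c by blast
    qed
  qed
  moreover have "{a,b,c} \<subseteq> flat_hull X L {a,b,c}" using hull_sub[OF lin, of "{a,b,c}"] X by simp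
  ultimately show ?thesis unfolding has_rank_def
  proof (intro conjI)
    assume c3: "card {a,b,c} = 3" and sub: "{a,b,c} \<subseteq> flat_hull X L {a,b,c}"
    show "\<exists>B\<subseteq>X. finite B \<and> card B = 3 \<and> {a, b, c} \<subseteq> flat_hull X L B"
      by (rule exI[of _ "{a,b,c}"]) (use X c3 sub in simp)
  qed blast
qed

lemma rank3_plane:
  assumes lin: "liner X L" and X: "a \<in> X" "b \<in> X" "c \<in> X" and r: "has_rank X L {a,b,c} 3"
  shows "plane X L (flat_hull X L {a,b,c})"
proof -
  have d: "a \<noteq> b" "a \<noteq> c" "b \<noteq> c"
  proof -
    have "3 \<le> card {a,b,c}" using rank3_lower[OF r _ _ hull_sub[OF lin]] X by auto
    then show "a \<noteq> b" "a \<noteq> c" "b \<noteq> c" by (auto simp: card_insert_if split: if_splits)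
  qed
  have "\<exists>B. B \<subseteq> X \<and> finite B \<and> card B = 3 \<and> flat_hull X L {a,b,c} \<subseteq> flat_hull X L B"
    by (rule exI[of _ "{a,b,c}"]) (use X d in auto)
  moreover have "3 \<le> card B" if "B \<subseteq> X" "finite B" "flat_hull X L {a,b,c} \<subseteq> flat_hull X L B" for B
    using rank3_lower[OF r that(1,2)] that(3) hull_sub[OF lin, of "{a,b,c}"] X by blast
  ultimately show ?thesis unfolding plane_def has_rank_def using hull_flat[OF lin, of "{a,b,c}"] X by auto
qed

lemma plane_flat: "plane X L P \<Longrightarrow> flat X L P" unfolding plane_def by simp

lemma key:
  assumes lin: "liner X L" and kp: "k_parallel X L \<kappa>" and P: "plane X L P"
    and Ln: "Ln \<in> L" "Ln \<subseteq> P" and x: "x \<in> P - Ln"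
    and Lam: "Lam \<in> L" "x \<in> Lam" "Lam \<subseteq> P - Ln"
    and l: "l1 \<in> Ln" "l2 \<in> Ln" "l1 \<noteq> l2"
  shows "Lam \<subseteq> flat_hull X L {x, l1, l2}"
proof (rule ccontr)
  assume nsub: "\<not> Lam \<subseteq> flat_hull X L {x, l1, l2}"
  have PX: "P \<subseteq> X" using plane_flat[OF P] unfolding flat_def by blast
  have X: "x \<in> X" "l1 \<in> X" "l2 \<in> X" using x l Ln PX by auto
  have Lneq: "Ln = line_through L l1 l2" using line_unique[OF lin Ln(1) l] .
  have nc: "x \<notin> line_through L l1 l2" using x Lneq by simp
  have r: "has_rank X L {l1, l2, x} 3" using noncollinear_rank3[OF lin X(2,3,1) l(3) nc] .
  have eq: "{l1,l2,x} = {x,l1,l2}" by auto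
  define F where "F = flat_hull X L {x, l1, l2}"
  have FP: "plane X L F" using rank3_plane[OF lin X(2,3,1) r] eq F_def by simp
  have FF: "flat X L F" using plane_flat[OF FP] .
  have sub: "{x,l1,l2} \<subseteq> F" using hull_sub[OF lin, of "{x,l1,l2}"] X F_def by auto
  have LnF: "Ln \<subseteq> F" using flat_line[OF FF] sub Lneq by auto
  have "{x,l1,l2} \<subseteq> P" using x l Ln by auto
  then have FsubP: "F \<subseteq> P" unfolding F_def by (rule hull_min[OF plane_flat[OF P]])
  define SF where "SF = {\<Lambda>. \<Lambda> \<in> L \<and> x \<in> \<Lambda> \<and> \<Lambda> \<subseteq> F - Ln}"
  define SP where "SP = {\<Lambda>. \<Lambda> \<in> L \<and> x \<in> \<Lambda> \<and> \<Lambda> \<subseteq> P - Ln}"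
  have f1: "finite SF" "card SF = \<kappa>" using kp FP Ln(1) LnF sub x unfolding k_parallel_def SF_def by auto
  have f2: "finite SP" "card SP = \<kappa>" using kp P Ln x unfolding k_parallel_def SP_def by auto
  have "SF \<subseteq> SP" using FsubP unfolding SF_def SP_def by auto
  moreover have "Lam \<in> SP" "Lam \<notin> SF" using Lam nsub unfolding SP_def SF_def F_def by auto
  ultimately have "SF \<subset> SP" by blast
  hence "card SF < card SP" using f2 psubset_card_mono by blast
  thus False using f1 f2 by simp
qed

lemma subpar:
  assumes lin: "liner X L" and kp: "k_parallel X L \<kappa>" and P: "plane X L P"
    and Ln: "Ln \<in> L" "Ln \<subseteq> P" and Lam: "Lam \<in> L" "Lam \<subseteq> P" and disj: "Lam \<inter> Ln = {}"
  shows "subparallel X L Lam Ln"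
  unfolding subparallel_def
proof
  fix y assume y: "y \<in> Lam"
  obtain l1 l2 where l: "l1 \<in> Ln" "l2 \<in> Ln" "l1 \<noteq> l2" using liner_D1(2)[OF lin Ln(1)] by blast
  have "Lam \<subseteq> flat_hull X L {y, l1, l2}"
    using key[OF lin kp P Ln, of y Lam l1 l2] y Lam disj l by blast
  also have "\<dots> \<subseteq> flat_hull X L (insert y Ln)"
    using hull_mono[OF lin, of "insert y Ln" "{y,l1,l2}"] y l Lam line_sub_X[OF lin] Ln by blast
  finally show "Lam \<subseteq> flat_hull X L (insert y Ln)" .
qed

lemma par:
  assumes lin: "liner X L" and kp: "k_parallel X L \<kappa>" and P: "plane X L P"
    and Ln: "Ln \<in> L" "Ln \<subseteq> P" and Lam: "Lam \<in> L" "Lam \<subseteq> P" and disj: "Lam \<inter> Ln = {}"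
  shows "parallel X L Lam Ln"
  unfolding parallel_def
  using subpar[OF lin kp P Ln Lam disj] subpar[OF lin kp P Lam Ln] disj by blast

theorem proposition6p7p7:
  fixes X :: "'a set" and L :: "'a set set" and \<kappa> :: nat
  assumes "liner X L"
    and "0 < \<kappa>"
    and "k_parallel X L \<kappa>"
  shows "\<forall>a b c. triangle X L a b c \<longrightarrow> (\<exists>d\<in>X. parallelogram X L a b c d)"
proof (intro allI impI)
  note lin = assms(1) and kp = assms(3)
  fix a b c assume "triangle X L a b c"
  hence X: "a \<in> X" "b \<in> X" "c \<in> X" and r: "has_rank X L {a,b,c} 3" unfolding triangle_def by auto
  define P where "P = flat_hull X L {a,b,c}"
  have PP: "plane X L P" using rank3_plane[OF lin X r] P_def by simp
  have PF: "flat X L P" using plane_flat[OF PP] .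
  have abcP: "{a,b,c} \<subseteq> P" using hull_sub[OF lin, of "{a,b,c}"] X P_def by auto
  have d: "a \<noteq> b" "a \<noteq> c" "b \<noteq> c"
  proof -
    have "3 \<le> card {a,b,c}" using rank3_lower[OF r _ _ hull_sub[OF lin]] X by auto
    then show "a \<noteq> b" "a \<noteq> c" "b \<noteq> c" by (auto simp: card_insert_if split: if_splits)
  qed
  define ab where "ab = line_through L a b"
  define bc where "bc = line_through L b c"
  have lab: "ab \<in> L" "a \<in> ab" "b \<in> ab" using line_props[OF lin X(1,2) d(1)] ab_def by auto
  have lbc: "bc \<in> L" "b \<in> bc" "c \<in> bc" using line_props[OF lin X(2,3) d(3)] bc_def by auto
  have abP: "ab \<subseteq> P" using flat_line[OF PF] abcP ab_def by auto
  have bcP: "bc \<subseteq> P" using flat_line[OF PF] abcP bc_def by auto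
  have cnab: "c \<notin> ab"
  proof
    assume "c \<in> ab"
    hence "{a,b,c} \<subseteq> flat_hull X L {a,b}"
      using flat_line[OF hull_flat[OF lin, of "{a,b}"]] hull_sub[OF lin, of "{a,b}"] X ab_def by blast
    from rank3_lower[OF r _ _ this] X show False by (auto simp: card_insert_if split: if_splits)
  qed
  have anbc: "a \<notin> bc"
  proof
    assume "a \<in> bc"
    hence "{a,b,c} \<subseteq> flat_hull X L {b,c}"
      using flat_line[OF hull_flat[OF lin, of "{b,c}"]] hull_sub[OF lin, of "{b,c}"] X bc_def by blast
    from rank3_lower[OF r _ _ this] X show False by (auto simp: card_insert_if split: if_splits)
  qed
  define S0 where "S0 = {\<Lambda>. \<Lambda> \<in> L \<and> c \<in> \<Lambda> \<and> \<Lambda> \<subseteq> P - ab}"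
  have "finite S0" "card S0 = \<kappa>" using kp PP lab abP abcP cnab unfolding k_parallel_def S0_def by auto
  hence "S0 \<noteq> {}" using assms(2) by auto
  then obtain Lam where Lam: "Lam \<in> L" "c \<in> Lam" "Lam \<subseteq> P - ab" unfolding S0_def by blast
  have anLam: "a \<notin> Lam" using Lam lab by blast
  define S where "S = {\<Lambda>. \<Lambda> \<in> L \<and> a \<in> \<Lambda> \<and> \<Lambda> \<subseteq> P - Lam}"
  define T where "T = {\<Lambda>. \<Lambda> \<in> L \<and> a \<in> \<Lambda> \<and> \<Lambda> \<subseteq> P - bc}"
  have fS: "finite S" "card S = \<kappa>" using kp PP Lam anLam abcP unfolding k_parallel_def S_def by auto
  have fT: "finite T" "card T = \<kappa>" using kp PP lbc bcP anbc abcP unfolding k_parallel_def T_def by auto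
  have "ab \<in> S" using lab abP Lam unfolding S_def by blast
  moreover have "ab \<notin> T" using lab lbc unfolding T_def by blast
  ultimately have "\<not> T \<subseteq> S"
  proof -
    assume "ab \<in> S" "ab \<notin> T"
    show "\<not> T \<subseteq> S"
    proof
      assume "T \<subseteq> S"
      hence "T \<subset> S" using \<open>ab \<in> S\<close> \<open>ab \<notin> T\<close> by blast
      hence "card T < card S" using fS psubset_card_mono by blast
      thus False using fS fT by simp
    qed
  qed
  then obtain M where M: "M \<in> T" "M \<notin> S" by blast
  hence M': "M \<in> L" "a \<in> M" "M \<subseteq> P - bc" unfolding T_def by auto
  then obtain dd where dd: "dd \<in> M" "dd \<in> Lam" using M(2) unfolding S_def by blast
  have ddX: "dd \<in> X" using dd Lam line_sub_X[OF lin] by blast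
  have ddc: "dd \<noteq> c" using dd M' lbc by blast
  have dda: "dd \<noteq> a" using dd anLam by blast
  have eq1: "line_through L c dd = Lam" using line_unique[OF lin Lam(1) Lam(2) dd(2) ddc[symmetric]] by simp
  have eq2: "line_through L a dd = M" using line_unique[OF lin M'(1) M'(2) dd(1) dda[symmetric]] by simp
  have p1: "parallel X L ab Lam" using par[OF lin kp PP Lam(1) _ lab(1) abP] Lam by blast
  have p2: "parallel X L bc M" using par[OF lin kp PP M'(1) _ lbc(1) bcP] M' by blast
  show "\<exists>d\<in>X. parallelogram X L a b c d"
  proof (intro bexI[of _ dd])
    have n1: "Lam \<noteq> ab" using Lam(2) cnab by blast
    have n2: "bc \<noteq> M" using M'(2) anbc by blast
    show "parallelogram X L a b c dd"
      unfolding parallelogram_def eq1 eq2 ab_def[symmetric] bc_def[symmetric]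
      using ddX X p1 p2 n1 n2 by simp
  qed (rule ddX)
qed

end
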